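(* Let $\theta\in\mathbb{R}$, $q=e^{2\pi i\theta}$, let $A_\theta$ be the unital $\mathbb{C}$-algebra generated by invertible $U,V$ with $UV=qVU$, and let $R=\mathbb{C}[U,U^{-1}]\subset A_\theta$ with $\mathfrak s=\mathfrak t:R\to A_\theta$ the inclusion. Define $\Delta(U^nV^m)=U^nV^m\otimes_R V^m$ and $\varepsilon(U^nV^m)=U^n$ (extended linearly). Then: (1) $(A_\theta,\mathfrak s,\mathfrak t,\Delta,\varepsilon)$ is a left $\times_R$-Hopf algebra, i.e. a left $R$-bialgebroid for which $\nu:A_\theta\otimes_{R^{op}}A_\theta\to A_\theta\otimes_R A_\theta$, $k\otimes k'\mapsto k_{(1)}\otimes_R k_{(2)}k'$, is bijective; (2) the map $\delta:A_\theta\to R$, $\delta(U^nV^m)=q^{nm}U^n$, is a right character; (3) $R$ with the right action $U^k\triangleleft U^nV^m=q^{(k+n)m}U^{k+n}$ and the coaction $U^n\mapsto U^n\otimes_R1$ is a right-left SAYD module ${}^1R_\delta$ over $A_\theta$.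
   Context: A left $R$-bialgebroid is a $\mathbb{C}$-algebra $\mathcal K$ with algebra maps $\mathfrak s:R\to\mathcal K$, $\mathfrak t:R^{op}\to\mathcal K$ with commuting ranges, $R$-bimodule structure $r_1\cdot k\cdot r_2=\mathfrak s(r_1)\mathfrak t(r_2)k$, and $R$-bimodule maps $\Delta(k)=k_{(1)}\otimes_R k_{(2)}$, $\varepsilon:\mathcal K\to R$ forming a coassociative counital $R$-coring, with $k_{(1)}\mathfrak t(r)\otimes_R k_{(2)}=k_{(1)}\otimes_R k_{(2)}\mathfrak s(r)$, $\Delta(1)=1\otimes_R1$, $\Delta(kk')=k_{(1)}k'_{(1)}\otimes_R k_{(2)}k'_{(2)}$, $\varepsilon(1)=1_R$, $\varepsilon(kk')=\varepsilon(k\mathfrak s(\varepsilon(k')))$. It is a left $\times_R$-Hopf algebra if $\nu$ (domain balanced by $k\mathfrak t(r)\otimes k'=k\otimes\mathfrak t(r)k'$) is bijective; write $\nu^{-1}(k\otimes_R1)=k^-\otimes_{R^{op}}k^+$. A right character is a map $\delta:\mathcal K\to R$ with $\delta(k\mathfrak s(r))=\delta(k)r$, $\delta(k_1k_2)=\delta(\mathfrak s(\delta(k_1))k_2)$, $\delta(1)=1_R$. A right-left SAYD module over $\mathcal K$: a right $\mathcal K$-module and left $\mathcal K$-comodule $M$ (coaction $m\mapsto m_{(-1)}\otimes_R m_{(0)}$, left $R$-linear, coassociative, counital) with left $R$-action $r\cdot m=m\mathfrak t(r)$ and $\varepsilon(m_{(-1)}\mathfrak s(r))\cdot m_{(0)}=m\mathfrak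 s(r)$, satisfying $(mk)_{(-1)}\otimes_R(mk)_{(0)}=k_{(2)}{}^{+}m_{(-1)}k_{(1)}\otimes_R m_{(0)}k_{(2)}{}^{-}$ and $m_{(0)}m_{(-1)}=m$. *)

theory Defs
  imports Complex_Main "HOL-Library.Product_Lexorder"
begin

definition fsupp :: "('a \<Rightarrow> complex) \<Rightarrow> 'a set" where
  "fsupp f = {x. f x \<noteq> 0}"

definition finsupp :: "('a \<Rightarrow> complex) set" where
  "finsupp = {f. finite (fsupp f)}"

definition mon :: "'a \<Rightarrow> 'a \<Rightarrow> complex" where
  "mon p = (\<lambda>x. if x = p then 1 else 0)"

definition linext :: "('a \<Rightarrow> 'c \<Rightarrow> complex) \<Rightarrow> ('a \<Rightarrow> complex) \<Rightarrow> 'c \<Rightarrow> complex" where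
  "linext F f = (\<lambda>z. \<Sum>p\<in>fsupp f. f p * F p z)"

definition bilext :: "('a \<Rightarrow> 'b \<Rightarrow> 'c \<Rightarrow> complex) \<Rightarrow> ('a \<Rightarrow> complex) \<Rightarrow> ('b \<Rightarrow> complex) \<Rightarrow> 'c \<Rightarrow> complex" where
  "bilext F f g = (\<lambda>z. \<Sum>p\<in>fsupp f. \<Sum>p'\<in>fsupp g. f p * g p' * F p p' z)"

definition lsum :: "('a \<Rightarrow> complex) list \<Rightarrow> 'a \<Rightarrow> complex" where
  "lsum xs = (\<lambda>z. \<Sum>f\<leftarrow>xs. f z)"

section \<open>The noncommutative torus A_theta and R = C[U,U^-1]\<close>

text \<open>An element of A_theta is the coefficient function (n,m) \<mapsto> coefficient of U^n V^m;
  an element of R is the coefficient function n \<mapsto> coefficient of U^n.\<close>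
type_synonym alg = "int \<times> int \<Rightarrow> complex"
type_synonym base = "int \<Rightarrow> complex"

definition Alg :: "alg set" where "Alg = finsupp"
definition Base :: "base set" where "Base = finsupp"

definition qq :: "real \<Rightarrow> complex" where "qq \<theta> = cis (2 * pi * \<theta>)"

text \<open>U^n V^m * U^k V^l = q^(-mk) U^(n+k) V^(m+l), since UV = qVU.\<close>
definition amul :: "real \<Rightarrow> alg \<Rightarrow> alg \<Rightarrow> alg" where
  "amul \<theta> = bilext (\<lambda>(n, m) (k, l). \<lambda>z. qq \<theta> powi (- (m * k)) * mon (n + k, m + l) z)"

definition aone :: alg where "aone = mon (0, 0)"

definition rmul :: "base \<Rightarrow> base \<Rightarrow> base" where
  "rmul = bilext (\<lambda>a b. mon (a + b))"

definition rone :: base where "rone = mon 0"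

text \<open>the inclusion R \<subseteq> A_theta; s = t = incl\<close>
definition incl :: "base \<Rightarrow> alg" where
  "incl = linext (\<lambda>n. mon (n, 0))"

definition eps :: "alg \<Rightarrow> base" where
  "eps = linext (\<lambda>(n, m). mon n)"

text \<open>Representatives of elements of tensor products: lists of pure tensors.
  A tensor of coefficient functions is the coefficient function on the product basis.\<close>
definition tens :: "('a \<Rightarrow> complex) \<Rightarrow> ('b \<Rightarrow> complex) \<Rightarrow> 'a \<times> 'b \<Rightarrow> complex" where
  "tens f g = (\<lambda>(x, y). f x * g y)"

definition emb :: "(('a \<Rightarrow> complex) \<times> ('b \<Rightarrow> complex)) list \<Rightarrow> 'a \<times> 'b \<Rightarrow> complex" where
  "emb xs = (\<lambda>z. \<Sum>p\<leftarrow>xs. tens (fst p) (snd p) z)"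

definition emb3 :: "(('a \<Rightarrow> complex) \<times> ('b \<Rightarrow> complex) \<times> ('c \<Rightarrow> complex)) list
                    \<Rightarrow> 'a \<times> 'b \<times> 'c \<Rightarrow> complex" where
  "emb3 xs = emb (map (\<lambda>(a, b, c). (a, tens b c)) xs)"

inductive_set cspan :: "('a \<Rightarrow> complex) set \<Rightarrow> ('a \<Rightarrow> complex) set" for G where
  zero: "(\<lambda>_. 0) \<in> cspan G"
| add: "g \<in> G \<Longrightarrow> x \<in> cspan G \<Longrightarrow> (\<lambda>z. c * g z + x z) \<in> cspan G"

text \<open>equality in a balanced tensor product = difference lies in the span of the balancing relations\<close>
definition teq :: "('a \<times> 'b \<Rightarrow> complex) set \<Rightarrow> (('a \<Rightarrow> complex) \<times> ('b \<Rightarrow> complex)) list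
                   \<Rightarrow> (('a \<Rightarrow> complex) \<times> ('b \<Rightarrow> complex)) list \<Rightarrow> bool" where
  "teq G xs ys \<longleftrightarrow> (\<lambda>z. emb xs z - emb ys z) \<in> cspan G"

definition teq3 :: "('a \<times> 'b \<times> 'c \<Rightarrow> complex) set
                   \<Rightarrow> (('a \<Rightarrow> complex) \<times> ('b \<Rightarrow> complex) \<times> ('c \<Rightarrow> complex)) list
                   \<Rightarrow> (('a \<Rightarrow> complex) \<times> ('b \<Rightarrow> complex) \<times> ('c \<Rightarrow> complex)) list \<Rightarrow> bool" where
  "teq3 G xs ys \<longleftrightarrow> (\<lambda>z. emb3 xs z - emb3 ys z) \<in> cspan G"

text \<open>A \<otimes>_R A : k t(r) \<otimes> k' ... the R-bimodule structure is r1.k.r2 = s(r1) t(r2) k, so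
  the relation is  t(r) k \<otimes> k' = k \<otimes> s(r) k'.\<close>
definition balR :: "real \<Rightarrow> ((int \<times> int) \<times> (int \<times> int) \<Rightarrow> complex) set" where
  "balR \<theta> = {(\<lambda>z. tens (amul \<theta> (incl r) k) k' z - tens k (amul \<theta> (incl r) k') z)
              | r k k'. r \<in> Base \<and> k \<in> Alg \<and> k' \<in> Alg}"

definition balRop :: "real \<Rightarrow> ((int \<times> int) \<times> (int \<times> int) \<Rightarrow> complex) set" where
  "balRop \<theta> = {(\<lambda>z. tens (amul \<theta> k (incl r)) k' z - tens k (amul \<theta> (incl r) k') z)
              | r k k'. r \<in> Base \<and> k \<in> Alg \<and> k' \<in> Alg}"

definition balRR :: "real \<Rightarrow> ((int \<times> int) \<times> (int \<times> int) \<times> (int \<times> int) \<Rightarrow> complex) set" where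
  "balRR \<theta> =
     {(\<lambda>z. tens (amul \<theta> (incl r) k) (tens k' k'') z - tens k (tens (amul \<theta> (incl r) k') k'') z)
       | r k k' k''. r \<in> Base \<and> k \<in> Alg \<and> k' \<in> Alg \<and> k'' \<in> Alg}
   \<union> {(\<lambda>z. tens k (tens (amul \<theta> (incl r) k') k'') z - tens k (tens k' (amul \<theta> (incl r) k'')) z)
       | r k k' k''. r \<in> Base \<and> k \<in> Alg \<and> k' \<in> Alg \<and> k'' \<in> Alg}"

definition tlist :: "(('a \<Rightarrow> complex) \<times> ('b \<Rightarrow> complex)) list \<Rightarrow> bool" where
  "tlist xs \<longleftrightarrow> (\<forall>p\<in>set xs. fst p \<in> finsupp \<and> snd p \<in> finsupp)"

definition delta :: "alg \<Rightarrow> (alg \<times> alg) list" where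
  "delta f = map (\<lambda>p. ((\<lambda>z. f p * mon p z), mon (0, snd p))) (sorted_list_of_set (fsupp f))"

definition nu :: "real \<Rightarrow> (alg \<times> alg) list \<Rightarrow> (alg \<times> alg) list" where
  "nu \<theta> xs = concat (map (\<lambda>(k, k'). map (\<lambda>(a, b). (a, amul \<theta> b k')) (delta k)) xs)"

definition left_bialgebroid_Atheta :: "real \<Rightarrow> bool" where
  "left_bialgebroid_Atheta \<theta> \<longleftrightarrow>
    \<comment> \<open>s = incl : R \<rightarrow> A and t = incl : R^op \<rightarrow> A are algebra maps with commuting ranges\<close>
    incl rone = aone \<and>
    (\<forall>r\<in>Base. \<forall>r'\<in>Base. incl (rmul r r') = amul \<theta> (incl r) (incl r')) \<and>
    (\<forall>r\<in>Base. \<forall>r'\<in>Base. incl (rmul r r') = amul \<theta> (incl r') (incl r)) \<and>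
    (\<forall>r\<in>Base. \<forall>r'\<in>Base. amul \<theta> (incl r) (incl r') = amul \<theta> (incl r') (incl r)) \<and>
    \<comment> \<open>Delta and epsilon are R-bimodule maps\<close>
    (\<forall>k\<in>Alg. \<forall>r1\<in>Base. \<forall>r2\<in>Base.
       teq (balR \<theta>) (delta (amul \<theta> (amul \<theta> (incl r1) (incl r2)) k))
                    (map (\<lambda>(a, b). (amul \<theta> (incl r1) a, amul \<theta> (incl r2) b)) (delta k))) \<and>
    (\<forall>k\<in>Alg. \<forall>r1\<in>Base. \<forall>r2\<in>Base.
       eps (amul \<theta> (amul \<theta> (incl r1) (incl r2)) k) = rmul (rmul r1 (eps k)) r2) \<and>
    \<comment> \<open>coassociativity\<close>
    (\<forall>k\<in>Alg.
       teq3 (balRR \<theta>)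
         (concat (map (\<lambda>(a, b). map (\<lambda>(c, d). (c, d, b)) (delta a)) (delta k)))
         (concat (map (\<lambda>(a, b). map (\<lambda>(c, d). (a, c, d)) (delta b)) (delta k)))) \<and>
    \<comment> \<open>counitality: epsilon(k_(1)).k_(2) = k = k_(1).epsilon(k_(2))\<close>
    (\<forall>k\<in>Alg. lsum (map (\<lambda>(a, b). amul \<theta> (incl (eps a)) b) (delta k)) = k) \<and>
    (\<forall>k\<in>Alg. lsum (map (\<lambda>(a, b). amul \<theta> (incl (eps b)) a) (delta k)) = k) \<and>
    \<comment> \<open>Takeuchi condition k_(1) t(r) \<otimes> k_(2) = k_(1) \<otimes> k_(2) s(r)\<close>
    (\<forall>k\<in>Alg. \<forall>r\<in>Base.
       teq (balR \<theta>) (map (\<lambda>(a, b). (amul \<theta> a (incl r), b)) (delta k))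
                    (map (\<lambda>(a, b). (a, amul \<theta> b (incl r))) (delta k))) \<and>
    teq (balR \<theta>) (delta aone) [(aone, aone)] \<and>
    (\<forall>k\<in>Alg. \<forall>k'\<in>Alg.
       teq (balR \<theta>) (delta (amul \<theta> k k'))
         (concat (map (\<lambda>(a, b). map (\<lambda>(a', b'). (amul \<theta> a a', amul \<theta> b b')) (delta k')) (delta k)))) \<and>
    eps aone = rone \<and>
    (\<forall>k\<in>Alg. \<forall>k'\<in>Alg. eps (amul \<theta> k k') = eps (amul \<theta> k (incl (eps k'))))"

definition left_Hopf_Atheta :: "real \<Rightarrow> bool" where
  "left_Hopf_Atheta \<theta> \<longleftrightarrow>
    left_bialgebroid_Atheta \<theta> \<and>
    \<comment> \<open>nu : A \<otimes>_{R^op} A \<rightarrow> A \<otimes>_R A is well defined, injective and surjective\<close>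
    (\<forall>xs ys. tlist xs \<and> tlist ys \<and> teq (balRop \<theta>) xs ys \<longrightarrow> teq (balR \<theta>) (nu \<theta> xs) (nu \<theta> ys)) \<and>
    (\<forall>xs ys. tlist xs \<and> tlist ys \<and> teq (balR \<theta>) (nu \<theta> xs) (nu \<theta> ys) \<longrightarrow> teq (balRop \<theta>) xs ys) \<and>
    (\<forall>ys. tlist ys \<longrightarrow> (\<exists>xs. tlist xs \<and> teq (balR \<theta>) (nu \<theta> xs) ys))"

definition chi :: "real \<Rightarrow> alg \<Rightarrow> base" where
  "chi \<theta> = linext (\<lambda>(n, m). \<lambda>z. qq \<theta> powi (n * m) * mon n z)"

definition right_character_Atheta :: "real \<Rightarrow> (alg \<Rightarrow> base) \<Rightarrow> bool" where
  "right_character_Atheta \<theta> d \<longleftrightarrow>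
    (\<forall>k\<in>Alg. \<forall>r\<in>Base. d (amul \<theta> k (incl r)) = rmul (d k) r) \<and>
    (\<forall>k1\<in>Alg. \<forall>k2\<in>Alg. d (amul \<theta> k1 k2) = d (amul \<theta> (incl (d k1)) k2)) \<and>
    d aone = rone"

definition act :: "real \<Rightarrow> base \<Rightarrow> alg \<Rightarrow> base" where
  "act \<theta> = bilext (\<lambda>j (n, m). \<lambda>z. qq \<theta> powi ((j + n) * m) * mon (j + n) z)"

definition coact :: "base \<Rightarrow> (alg \<times> base) list" where
  "coact m = map (\<lambda>n. ((\<lambda>z. m n * mon (n, 0) z), rone)) (sorted_list_of_set (fsupp m))"

text \<open>A \<otimes>_R M, with r.m = m t(r):  t(r) k \<otimes> m = k \<otimes> m \<triangleleft> t(r)\<close>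
definition balKM :: "real \<Rightarrow> ((int \<times> int) \<times> int \<Rightarrow> complex) set" where
  "balKM \<theta> = {(\<lambda>z. tens (amul \<theta> (incl r) k) m z - tens k (act \<theta> m (incl r)) z)
              | r k m. r \<in> Base \<and> k \<in> Alg \<and> m \<in> Base}"

definition balKKM :: "real \<Rightarrow> ((int \<times> int) \<times> (int \<times> int) \<times> int \<Rightarrow> complex) set" where
  "balKKM \<theta> =
     {(\<lambda>z. tens (amul \<theta> (incl r) k) (tens k' m) z - tens k (tens (amul \<theta> (incl r) k') m) z)
       | r k k' m. r \<in> Base \<and> k \<in> Alg \<and> k' \<in> Alg \<and> m \<in> Base}
   \<union> {(\<lambda>z. tens k (tens (amul \<theta> (incl r) k') m) z - tens k (tens k' (act \<theta> m (incl r))) z)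
       | r k k' m. r \<in> Base \<and> k \<in> Alg \<and> k' \<in> Alg \<and> m \<in> Base}"

definition SAYD_Atheta :: "real \<Rightarrow> (base \<Rightarrow> alg \<Rightarrow> base) \<Rightarrow> (base \<Rightarrow> (alg \<times> base) list) \<Rightarrow> bool" where
  "SAYD_Atheta \<theta> ac co \<longleftrightarrow>
    \<comment> \<open>right A-module\<close>
    (\<forall>m\<in>Base. ac m aone = m) \<and>
    (\<forall>m\<in>Base. \<forall>k\<in>Alg. \<forall>k'\<in>Alg. ac (ac m k) k' = ac m (amul \<theta> k k')) \<and>
    \<comment> \<open>left A-comodule: coaction left R-linear (r.m = m t(r)), coassociative, counital\<close>
    (\<forall>m\<in>Base. tlist (co m)) \<and>
    (\<forall>m\<in>Base. \<forall>r\<in>Base.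
       teq (balKM \<theta>) (co (ac m (incl r))) (map (\<lambda>(a, b). (amul \<theta> (incl r) a, b)) (co m))) \<and>
    (\<forall>m\<in>Base.
       teq3 (balKKM \<theta>)
         (concat (map (\<lambda>(a, b). map (\<lambda>(c, d). (c, d, b)) (delta a)) (co m)))
         (concat (map (\<lambda>(a, b). map (\<lambda>(c, d). (a, c, d)) (co b)) (co m)))) \<and>
    (\<forall>m\<in>Base. lsum (map (\<lambda>(a, b). ac b (incl (eps a))) (co m)) = m) \<and>
    \<comment> \<open>epsilon(m_(-1) s(r)).m_(0) = m s(r)\<close>
    (\<forall>m\<in>Base. \<forall>r\<in>Base.
       lsum (map (\<lambda>(a, b). ac b (incl (eps (amul \<theta> a (incl r))))) (co m)) = ac m (incl r)) \<and>
    \<comment> \<open>anti-Yetter-Drinfeld condition, for any choice of representatives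
        tinv k = k^- \<otimes>_{R^op} k^+ of nu^{-1}(k \<otimes>_R 1)\<close>
    (\<forall>tinv. (\<forall>k\<in>Alg. tlist (tinv k) \<and> teq (balR \<theta>) (nu \<theta> (tinv k)) [(k, aone)]) \<longrightarrow>
       (\<forall>m\<in>Base. \<forall>k\<in>Alg.
          teq (balKM \<theta>) (co (ac m k))
            (concat (map (\<lambda>(k1, k2). concat (map (\<lambda>(km, kp).
                map (\<lambda>(a, b). (amul \<theta> (amul \<theta> kp a) k1, ac b km)) (co m)) (tinv k2))) (delta k))))) \<and>
    \<comment> \<open>stability m_(0) m_(-1) = m\<close>
    (\<forall>m\<in>Base. lsum (map (\<lambda>(a, b). ac b a) (co m)) = m)"

end

theory Submission
  imports Defs
begin


lemma fsupp_mon[simp]: "fsupp (mon p) = {p}" by (auto simp: fsupp_def mon_def)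
lemma mon_fin[simp]: "mon p \<in> finsupp" by (simp add: finsupp_def)
lemma finsupp_iff: "f \<in> finsupp \<longleftrightarrow> finite (fsupp f)" by (simp add: finsupp_def)

lemma fsupp_sum: "fsupp (\<lambda>z. \<Sum>i\<in>I. g i z) \<subseteq> (\<Union>i\<in>I. fsupp (g i))"
  by (auto simp: fsupp_def intro: ccontr)

lemma finsupp_sum[simp]: "(\<And>i. g i \<in> finsupp) \<Longrightarrow> (\<lambda>z. \<Sum>i\<in>I. g i z) \<in> finsupp"
proof (cases "finite I")
  case True
  assume "\<And>i. g i \<in> finsupp"
  then show ?thesis using True fsupp_sum[of g I]
    by (simp add: finsupp_def) (meson finite_UN_I finite_subset)
qed (simp add: finsupp_def fsupp_def)

lemma finsupp_scal[simp]: "g \<in> finsupp \<Longrightarrow> (\<lambda>z. c * g z) \<in> finsupp"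
  by (auto simp: finsupp_def fsupp_def elim: finite_subset[rotated])

lemma finsupp_zero[simp]: "(\<lambda>z. 0) \<in> finsupp" by (simp add: finsupp_def fsupp_def)

lemma finsupp_linext[simp]: "(\<And>p. F p \<in> finsupp) \<Longrightarrow> linext F f \<in> finsupp"
  unfolding linext_def by simp

lemma linext_superset:
  assumes "finite S" "fsupp f \<subseteq> S"
  shows "linext F f = (\<lambda>z. \<Sum>p\<in>S. f p * F p z)"
  unfolding linext_def
  by (rule ext, rule sum.mono_neutral_left) (use assms in \<open>auto simp: fsupp_def\<close>)

lemma bilext_linext: "bilext B f g = linext (\<lambda>p. linext (B p) g) f"
  unfolding bilext_def linext_def by (simp add: sum_distrib_left mult.assoc)

lemma linext_mon[simp]: "linext F (mon p) = F p"
  proof -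
  have "fsupp (mon p) = {p}" by simp
  then show ?thesis unfolding linext_def by (simp add: mon_def)
qed

lemma linext_zero[simp]: "linext F (\<lambda>z. 0) = (\<lambda>z. 0)"
  unfolding linext_def by (simp add: fsupp_def)

lemma linext_infinite: "\<not> finite (fsupp f) \<Longrightarrow> linext F f = (\<lambda>z. 0)"
  unfolding linext_def by simp

lemma linext_linext[simp]:
  assumes "\<And>p. F p \<in> finsupp"
  shows "linext G (linext F f) = linext (\<lambda>p. linext G (F p)) f"
proof (cases "finite (fsupp f)")
  case False
  then show ?thesis by (simp add: linext_infinite)
next
  case True
  define S where "S = (\<Union>p\<in>fsupp f. fsupp (F p))"
  have S: "finite S" using True assms by (auto simp: S_def finsupp_def)
  have sub: "fsupp (linext F f) \<subseteq> S" unfolding linext_def S_def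
    using fsupp_sum[of "\<lambda>p z. f p * F p z" "fsupp f"] by (auto simp: fsupp_def)
  show ?thesis
  proof (rule ext)
    fix z
    have "linext G (linext F f) z = (\<Sum>s\<in>S. linext F f s * G s z)"
      using linext_superset[OF S sub, of G] by simp
    also have "\<dots> = (\<Sum>s\<in>S. (\<Sum>p\<in>fsupp f. f p * F p s) * G s z)"
      by (simp add: linext_def)
    also have "\<dots> = (\<Sum>p\<in>fsupp f. f p * (\<Sum>s\<in>S. F p s * G s z))"
      by (simp add: sum_distrib_left sum_distrib_right mult.assoc sum.swap[of _ S])
    also have "\<dots> = (\<Sum>p\<in>fsupp f. f p * linext G (F p) z)"
    proof (rule sum.cong[OF refl])
      fix p assume "p \<in> fsupp f"
      then have "fsupp (F p) \<subseteq> S" by (auto simp: S_def)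
      then show "f p * (\<Sum>s\<in>S. F p s * G s z) = f p * linext G (F p) z"
        using linext_superset[OF S, of "F p" G] by simp
    qed
    finally show "linext G (linext F f) z = linext (\<lambda>p. linext G (F p)) f z"
      by (simp add: linext_def)
  qed
qed

lemma fsupp_scal: "c \<noteq> 0 \<Longrightarrow> fsupp (\<lambda>z. c * g z) = fsupp g"
  by (auto simp: fsupp_def)

lemma linext_scal[simp]: "linext G (\<lambda>z. c * g z) = (\<lambda>z. c * linext G g z)"
  by (cases "c = 0") (auto simp: linext_def fsupp_scal sum_distrib_left mult.assoc)

lemma linext_decomp: "g \<in> finsupp \<Longrightarrow> linext mon g = g"
  unfolding linext_def
proof (rule ext)
  fix z assume "g \<in> finsupp"
  show "(\<Sum>p\<in>fsupp g. g p * mon p z) = g z"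
  proof (cases "z \<in> fsupp g")
    case True
    then show ?thesis using \<open>g \<in> finsupp\<close>
      by (simp add: mon_def finsupp_def if_distrib[of "\<lambda>x. _ * x"] cong: if_cong)
  next
    case False
    then have "g z = 0" by (simp add: fsupp_def)
    moreover have "\<forall>p\<in>fsupp g. g p * mon p z = 0" using False by (auto simp: mon_def)
    ultimately show ?thesis by (metis (no_types, lifting) mult_eq_0_iff sum.neutral)
  qed
qed

lemma linext_cong: "(\<And>p. p \<in> fsupp f \<Longrightarrow> F p = G p) \<Longrightarrow> linext F f = linext G f"
  unfolding linext_def by simp

lemma linext_swap: "linext (\<lambda>p. linext (F p) g) f = linext (\<lambda>q. linext (\<lambda>p. F p q) f) g"
  unfolding linext_def by (rule ext) (simp add: sum_distrib_left sum.swap[of _ "fsupp f"] mult.left_commute)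

lemma linext_diff: "(\<lambda>z. linext F f z - linext G f z) = linext (\<lambda>p z. F p z - G p z) f"
  unfolding linext_def by (simp add: sum_subtractf right_diff_distrib)

lemma linext_add: "(\<lambda>z. linext F f z + linext G f z) = linext (\<lambda>p z. F p z + G p z) f"
  unfolding linext_def by (simp add: sum.distrib distrib_left)

lemma tens_linext_left[simp]: "tens (linext F f) g = linext (\<lambda>p. tens (F p) g) f"
  unfolding tens_def linext_def by (auto simp: sum_distrib_right mult.assoc)
lemma tens_linext_right[simp]: "tens g (linext F f) = linext (\<lambda>p. tens g (F p)) f"
  unfolding tens_def linext_def by (auto simp: sum_distrib_left mult.left_commute)
lemma tens_scal_left[simp]: "tens (\<lambda>z. c * g z) h = (\<lambda>z. c * tens g h z)"
  unfolding tens_def by (auto simp: mult.assoc)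
lemma tens_scal_right[simp]: "tens h (\<lambda>z. c * g z) = (\<lambda>z. c * tens h g z)"
  unfolding tens_def by (auto simp: mult.left_commute)
lemma tens_mon[simp]: "tens (mon p) (mon q) = mon (p, q)"
  unfolding tens_def mon_def by auto

lemma finsupp_tens[simp]: "f \<in> finsupp \<Longrightarrow> g \<in> finsupp \<Longrightarrow> tens f g \<in> finsupp"
proof -
  assume a: "f \<in> finsupp" "g \<in> finsupp"
  have "fsupp (tens f g) \<subseteq> fsupp f \<times> fsupp g" by (auto simp: tens_def fsupp_def)
  then show ?thesis using a by (auto simp: finsupp_def intro: finite_subset)
qed

lemma cspan_gen: "g \<in> G \<Longrightarrow> g \<in> cspan G"
  using cspan.add[OF _ cspan.zero, of g G 1] by simp

lemma cspan_add: "x \<in> cspan G \<Longrightarrow> y \<in> cspan G \<Longrightarrow> (\<lambda>z. x z + y z) \<in> cspan G"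
proof (induction x rule: cspan.induct)
  case zero then show ?case by simp
next
  case (add g x c)
  then have "(\<lambda>z. c * g z + (x z + y z)) \<in> cspan G" by (intro cspan.add) auto
  then show ?case by (simp add: add.assoc)
qed

lemma cspan_scal: "x \<in> cspan G \<Longrightarrow> (\<lambda>z. c * x z) \<in> cspan G"
proof (induction x rule: cspan.induct)
  case zero then show ?case by (simp add: cspan.zero)
next
  case (add g x d)
  then have "(\<lambda>z. (c * d) * g z + c * x z) \<in> cspan G" by (intro cspan.add) auto
  then show ?case by (simp add: distrib_left mult.assoc)
qed

lemma cspan_sum: "(\<And>i. i \<in> I \<Longrightarrow> x i \<in> cspan G) \<Longrightarrow> (\<lambda>z. \<Sum>i\<in>I. x i z) \<in> cspan G"
proof (induction I rule: infinite_finite_induct)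
  case (infinite A) then show ?case by (simp add: cspan.zero)
next
  case empty then show ?case by (simp add: cspan.zero)
next
  case (insert a A)
  then show ?case by (simp add: cspan_add)
qed

lemma cspan_linext: "(\<And>p. p \<in> fsupp f \<Longrightarrow> F p \<in> cspan G) \<Longrightarrow> linext F f \<in> cspan G"
  unfolding linext_def by (intro cspan_sum cspan_scal)

lemma cspan_eq0: "(\<And>z. x z = 0) \<Longrightarrow> x \<in> cspan G"
proof -
  assume "\<And>z. x z = 0" then have "x = (\<lambda>_. 0)" by auto
  then show ?thesis by (simp add: cspan.zero)
qed

lemma cspan_sub: "x \<in> cspan G \<Longrightarrow> y \<in> cspan G \<Longrightarrow> (\<lambda>z. x z - y z) \<in> cspan G"
  using cspan_add[of x G "\<lambda>z. (-1) * y z"] cspan_scal[of y G "-1"] by simp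

lemma cspan_finsupp: "x \<in> cspan G \<Longrightarrow> G \<subseteq> finsupp \<Longrightarrow> x \<in> finsupp"
proof (induction x rule: cspan.induct)
  case zero then show ?case by simp
next
  case (add g x c)
  then have "(\<lambda>z. \<Sum>i\<in>{True,False}. (if i then (\<lambda>z. c * g z) else x) z) \<in> finsupp"
    by (intro finsupp_sum) auto
  then show ?case by simp
qed



lemma amul_def': "amul \<theta> = bilext (\<lambda>p p' z. qq \<theta> powi (- (snd p * fst p')) * mon (fst p + fst p', snd p + snd p') z)"
  unfolding amul_def by (simp add: case_prod_unfold)
lemma eps_def': "eps = linext (\<lambda>p. mon (fst p))"
  unfolding eps_def by (simp add: case_prod_unfold)
lemma chi_def': "chi \<theta> = linext (\<lambda>p z. qq \<theta> powi (fst p * snd p) * mon (fst p) z)"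
  unfolding chi_def by (simp add: case_prod_unfold)
lemma act_def': "act \<theta> = bilext (\<lambda>j p z. qq \<theta> powi ((j + fst p) * snd p) * mon (j + fst p) z)"
  unfolding act_def by (simp add: case_prod_unfold)

lemmas opdefs = amul_def' rmul_def act_def' incl_def eps_def' chi_def' bilext_linext aone_def rone_def

lemma qq_nz[simp]: "qq \<theta> \<noteq> 0" by (simp add: qq_def)

lemma sum_list_sorted: "finite A \<Longrightarrow> sum_list (map g (sorted_list_of_set A)) = sum g A"
  by (simp add: sum_list_distinct_conv_sum_set)

lemma emb_map: "emb (map h xs) = (\<lambda>z. \<Sum>x\<leftarrow>xs. tens (fst (h x)) (snd (h x)) z)"
  unfolding emb_def by (simp add: comp_def)

lemma emb_map_delta: "f \<in> finsupp \<Longrightarrow> emb (map h (delta f)) =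
   (\<lambda>z. \<Sum>p\<in>fsupp f. tens (fst (h (\<lambda>z. f p * mon p z, mon (0, snd p)))) (snd (h (\<lambda>z. f p * mon p z, mon (0, snd p)))) z)"
  unfolding delta_def emb_map by (simp add: sum_list_sorted finsupp_def comp_def)

lemma emb_delta: "f \<in> finsupp \<Longrightarrow> emb (delta f) = linext (\<lambda>p. mon (p, (0, snd p))) f"
  using emb_map_delta[of f id] by (simp add: linext_def)

lemma fold_linext: "(\<lambda>z. \<Sum>p\<in>fsupp f. f p * T p z) = linext T f"
  by (simp add: linext_def)

lemma emb_concat: "emb (concat L) = (\<lambda>z. \<Sum>l\<leftarrow>L. emb l z)"
  unfolding emb_def by (rule ext, induction L) auto

lemma linext_scal_body[simp]: "linext (\<lambda>p z. c * T p z) f = (\<lambda>z. c * linext T f z)"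
  unfolding linext_def by (simp add: sum_distrib_left mult.left_commute)

lemma emb_map_delta': "f \<in> finsupp \<Longrightarrow>
  (\<And>c p. tens (fst (h (\<lambda>z. c * mon p z, mon (0, snd p)))) (snd (h (\<lambda>z. c * mon p z, mon (0, snd p))))
     = (\<lambda>z. c * tens (fst (h (mon p, mon (0, snd p)))) (snd (h (mon p, mon (0, snd p)))) z)) \<Longrightarrow>
  emb (map h (delta f)) = linext (\<lambda>p. tens (fst (h (mon p, mon (0, snd p)))) (snd (h (mon p, mon (0, snd p))))) f"
  by (simp add: emb_map_delta linext_def)

lemma emb_concat_delta: "f \<in> finsupp \<Longrightarrow>
  (\<And>c p. emb (g (\<lambda>z. c * mon p z, mon (0, snd p))) = (\<lambda>z. c * emb (g (mon p, mon (0, snd p))) z)) \<Longrightarrow>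
  emb (concat (map g (delta f))) = linext (\<lambda>p. emb (g (mon p, mon (0, snd p)))) f"
  unfolding emb_concat delta_def by (simp add: comp_def sum_list_sorted finsupp_def linext_def)

lemma lsum_map_delta: "f \<in> finsupp \<Longrightarrow>
  (\<And>c p. g (\<lambda>z. c * mon p z, mon (0, snd p)) = (\<lambda>z. c * g (mon p, mon (0, snd p)) z)) \<Longrightarrow>
  lsum (map g (delta f)) = linext (\<lambda>p. g (mon p, mon (0, snd p))) f"
  unfolding lsum_def delta_def by (simp add: comp_def sum_list_sorted finsupp_def linext_def)

lemma emb_single[simp]: "emb [(a, b)] = tens a b"
  unfolding emb_def by simp

lemma incl_rone: "incl rone = aone"
  by (simp add: opdefs)

lemma incl_rmul: "incl (rmul r r') = amul \<theta> (incl r) (incl r')"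
  by (simp add: opdefs)

lemma eps_bimod: "eps (amul \<theta> (amul \<theta> (incl r1) (incl r2)) k) = rmul (rmul r1 (eps k)) r2"
  apply (simp add: opdefs)
  apply (rule linext_cong)
  apply (subst linext_swap)
  apply (simp add: ac_simps)
  done

lemma counit1: "k \<in> finsupp \<Longrightarrow> lsum (map (\<lambda>(a, b). amul \<theta> (incl (eps a)) b) (delta k)) = k"
  by (subst lsum_map_delta) (simp_all add: opdefs linext_decomp)

lemma counit2: "k \<in> finsupp \<Longrightarrow> lsum (map (\<lambda>(a, b). amul \<theta> (incl (eps b)) a) (delta k)) = k"
  by (subst lsum_map_delta) (simp_all add: opdefs linext_decomp)

lemma eps_one: "eps aone = rone" by (simp add: opdefs)

lemma eps_mult: "eps (amul \<theta> k k') = eps (amul \<theta> k (incl (eps k')))"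
  by (simp add: opdefs)

lemma delta_one: "delta aone = [(aone, aone)]"
  by (simp add: delta_def aone_def mon_def[abs_def] fsupp_def)


lemmas msimps = opdefs emb_map_delta' emb_concat_delta emb_delta mult.left_commute lsum_map_delta

lemma delta_mult: "k \<in> finsupp \<Longrightarrow> k' \<in> finsupp \<Longrightarrow>
   emb (delta (amul \<theta> k k')) =
   emb (concat (map (\<lambda>(a, b). map (\<lambda>(a', b'). (amul \<theta> a a', amul \<theta> b b')) (delta k')) (delta k)))"
  by (simp add: msimps)

lemma Alg_fin[simp]: "k \<in> Alg \<longleftrightarrow> k \<in> finsupp" by (simp add: Alg_def)
lemma Base_fin[simp]: "k \<in> Base \<longleftrightarrow> k \<in> finsupp" by (simp add: Base_def)

lemma balR_basic0:
  "(\<lambda>z. s * mon ((a + j, m), (c, l)) z - s * mon ((a, m), (c + j, l)) z) \<in> cspan (balR \<theta>)"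
proof -
  have "(\<lambda>z. tens (amul \<theta> (incl (mon j)) (mon (a, m))) (mon (c, l)) z - tens (mon (a, m)) (amul \<theta> (incl (mon j)) (mon (c, l))) z) \<in> balR \<theta>"
    unfolding balR_def by (rule CollectI, intro exI conjI) (auto simp: Alg_def Base_def)
  then have "(\<lambda>z. mon ((a + j, m), (c, l)) z - mon ((a, m), (c + j, l)) z) \<in> cspan (balR \<theta>)"
    by (simp add: opdefs ac_simps cspan_gen)
  from cspan_scal[OF this, of s] show ?thesis by (simp add: right_diff_distrib)
qed

lemma balR_basic:
  assumes "fst x' - fst x = fst y' - fst y" "snd x' = snd x" "snd y' = snd y"
  shows "(\<lambda>z. s * mon (x', y) z - s * mon (x, y') z) \<in> cspan (balR \<theta>)"
proof -
  have "x' = (fst x + (fst x' - fst x), snd x)" "y' = (fst y + (fst x' - fst x), snd y)"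
    using assms by (auto simp: prod_eq_iff)
  then show ?thesis using balR_basic0[of s "fst x" "fst x' - fst x" "snd x" "fst y" "snd y" \<theta>]
    by simp
qed

lemma teqI: "(\<lambda>z. emb xs z - emb ys z) \<in> cspan G \<Longrightarrow> teq G xs ys"
  by (simp add: teq_def)

lemma takeuchi: "k \<in> finsupp \<Longrightarrow> r \<in> finsupp \<Longrightarrow>
  teq (balR \<theta>) (map (\<lambda>(a, b). (amul \<theta> a (incl r), b)) (delta k))
                    (map (\<lambda>(a, b). (a, amul \<theta> b (incl r))) (delta k))"
  apply (rule teqI)
  apply (simp add: msimps linext_diff)
  apply (intro cspan_linext)
  apply (rule balR_basic)
   apply auto
  done

lemma linext_rev3: "linext (\<lambda>a. linext (\<lambda>b. linext (\<lambda>c. X a b c) h) g) f = linext (\<lambda>c. linext (\<lambda>b. linext (\<lambda>a. X a b c) f) g) h"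
proof -
  have "linext (\<lambda>a. linext (\<lambda>b. linext (\<lambda>c. X a b c) h) g) f = linext (\<lambda>b. linext (\<lambda>a. linext (\<lambda>c. X a b c) h) f) g"
    by (rule linext_swap)
  also have "\<dots> = linext (\<lambda>b. linext (\<lambda>c. linext (\<lambda>a. X a b c) f) h) g"
    by (rule linext_cong, rule linext_swap)
  also have "\<dots> = linext (\<lambda>c. linext (\<lambda>b. linext (\<lambda>a. X a b c) f) g) h"
    by (rule linext_swap)
  finally show ?thesis .
qed

lemma balR_basic1:
  assumes "fst x' - fst x = fst y' - fst y" "snd x' = snd x" "snd y' = snd y"
  shows "(\<lambda>z. mon (x', y) z - mon (x, y') z) \<in> cspan (balR \<theta>)"
  using balR_basic[OF assms, of 1] by simp

lemma cspan_diff_right: "B' = B \<Longrightarrow> (\<lambda>z. A z - B' z) \<in> C \<Longrightarrow> (\<lambda>z. A z - B z) \<in> C"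
  by simp

lemma delta_bimod: "k \<in> finsupp \<Longrightarrow> r1 \<in> finsupp \<Longrightarrow> r2 \<in> finsupp \<Longrightarrow>
       teq (balR \<theta>) (delta (amul \<theta> (amul \<theta> (incl r1) (incl r2)) k))
                    (map (\<lambda>(a, b). (amul \<theta> (incl r1) a, amul \<theta> (incl r2) b)) (delta k))"
  apply (rule teqI)
  apply (simp add: msimps)
  apply (rule cspan_diff_right, rule linext_rev3[symmetric])
  apply (simp add: linext_diff)
  apply (intro cspan_linext)
  apply (rule balR_basic1)
    apply auto
  done
lemma teq_refl: "teq G xs xs" by (simp add: teq_def cspan.zero)
lemma teq3_eq: "emb3 xs = emb3 ys \<Longrightarrow> teq3 G xs ys" by (simp add: teq3_def cspan.zero)
lemma teq_eq: "emb xs = emb ys \<Longrightarrow> teq G xs ys" by (simp add: teq_def cspan.zero)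

lemma coassoc: "k \<in> finsupp \<Longrightarrow>
       teq3 (balRR \<theta>)
         (concat (map (\<lambda>(a, b). map (\<lambda>(c, d). (c, d, b)) (delta a)) (delta k)))
         (concat (map (\<lambda>(a, b). map (\<lambda>(c, d). (a, c, d)) (delta b)) (delta k)))"
  apply (rule teq3_eq)
  apply (simp add: emb3_def map_concat msimps)
  done

lemma incl_comm: "amul \<theta> (incl r) (incl r') = amul \<theta> (incl r') (incl r)"
  apply (simp add: opdefs)
  apply (subst linext_swap)
  apply (simp add: ac_simps)
  done

lemma bialgebroid: "left_bialgebroid_Atheta \<theta>"
  unfolding left_bialgebroid_Atheta_def Alg_def Base_def
  apply (intro conjI ballI)
  apply (rule incl_rone)
  apply (rule incl_rmul)
  apply (subst incl_comm, rule incl_rmul)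
  apply (rule incl_comm)
  apply (rule delta_bimod; assumption)
  apply (rule eps_bimod)
  apply (rule coassoc; assumption)
  apply (rule counit1; assumption)
  apply (rule counit2; assumption)
  apply (rule takeuchi; assumption)
  apply (simp add: delta_one teq_refl)
  apply (rule teq_eq, rule delta_mult; assumption)
  apply (rule eps_one)
  apply (rule eps_mult)
  done


lemma linext_scal_in: "(\<lambda>z. c * linext T f z) = linext (\<lambda>p z. c * T p z) f"
  by simp

lemma qq_mult: "qq \<theta> powi a * (qq \<theta> powi b * x) = qq \<theta> powi (a + b) * x"
  by (simp add: power_int_add)

lemma chi1: "chi \<theta> (amul \<theta> k (incl r)) = rmul (chi \<theta> k) r"
  apply (simp add: opdefs linext_scal_in del: linext_scal_body)
  apply (intro linext_cong ext)
  apply (simp add: qq_mult)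
  apply (simp add: algebra_simps)
  done
lemma chi2: "chi \<theta> (amul \<theta> k1 k2) = chi \<theta> (amul \<theta> (incl (chi \<theta> k1)) k2)"
  apply (simp add: opdefs linext_scal_in del: linext_scal_body)
  apply (intro linext_cong ext)
  apply (simp add: qq_mult)
  apply (simp add: algebra_simps)
  done

lemma chi3: "chi \<theta> aone = rone"
  by (simp add: opdefs)

lemma character: "right_character_Atheta \<theta> (chi \<theta>)"
  unfolding right_character_Atheta_def using chi1 chi2 chi3 by blast


definition NN :: "real \<Rightarrow> ((int \<times> int) \<times> (int \<times> int) \<Rightarrow> complex) \<Rightarrow> (int \<times> int) \<times> (int \<times> int) \<Rightarrow> complex" where
  "NN \<theta> F z = qq \<theta> powi (- (snd (fst z) * fst (snd z))) * F (fst z, (fst (snd z), snd (snd z) - snd (fst z)))"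
definition NI :: "real \<Rightarrow> ((int \<times> int) \<times> (int \<times> int) \<Rightarrow> complex) \<Rightarrow> (int \<times> int) \<times> (int \<times> int) \<Rightarrow> complex" where
  "NI \<theta> F z = qq \<theta> powi (snd (fst z) * fst (snd z)) * F (fst z, (fst (snd z), snd (snd z) + snd (fst z)))"

lemma NN_NI: "NN \<theta> (NI \<theta> F) = F"
  by (rule ext) (simp add: NN_def NI_def power_int_add[symmetric])
lemma NI_NN: "NI \<theta> (NN \<theta> F) = F"
  by (rule ext) (simp add: NN_def NI_def power_int_add[symmetric])

lemma NN_linext[simp]: "NN \<theta> (linext F f) = linext (\<lambda>p. NN \<theta> (F p)) f"
  by (rule ext) (simp add: NN_def linext_def sum_distrib_left mult.left_commute)
lemma NI_linext[simp]: "NI \<theta> (linext F f) = linext (\<lambda>p. NI \<theta> (F p)) f"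
  by (rule ext) (simp add: NI_def linext_def sum_distrib_left mult.left_commute)
lemma NN_scal[simp]: "NN \<theta> (\<lambda>z. c * g z) = (\<lambda>z. c * NN \<theta> g z)"
  by (rule ext) (simp add: NN_def mult.left_commute)
lemma NI_scal[simp]: "NI \<theta> (\<lambda>z. c * g z) = (\<lambda>z. c * NI \<theta> g z)"
  by (rule ext) (simp add: NI_def mult.left_commute)
lemma NN_diff[simp]: "NN \<theta> (\<lambda>z. a z - b z) = (\<lambda>z. NN \<theta> a z - NN \<theta> b z)"
  by (rule ext) (simp add: NN_def right_diff_distrib)
lemma NI_diff[simp]: "NI \<theta> (\<lambda>z. a z - b z) = (\<lambda>z. NI \<theta> a z - NI \<theta> b z)"
  by (rule ext) (simp add: NI_def right_diff_distrib)
lemma NN_add: "NN \<theta> (\<lambda>z. a z + b z) = (\<lambda>z. NN \<theta> a z + NN \<theta> b z)"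
  by (rule ext) (simp add: NN_def distrib_left)
lemma NI_add: "NI \<theta> (\<lambda>z. a z + b z) = (\<lambda>z. NI \<theta> a z + NI \<theta> b z)"
  by (rule ext) (simp add: NI_def distrib_left)
lemma NN_zero[simp]: "NN \<theta> (\<lambda>z. 0) = (\<lambda>z. 0)" by (rule ext) (simp add: NN_def)
lemma NI_zero[simp]: "NI \<theta> (\<lambda>z. 0) = (\<lambda>z. 0)" by (rule ext) (simp add: NI_def)

lemma NN_mon[simp]: "NN \<theta> (mon (a, b)) = (\<lambda>z. qq \<theta> powi (- (snd a * fst b)) * mon (a, (fst b, snd b + snd a)) z)"
  by (rule ext) (auto simp: NN_def mon_def)
lemma NI_mon[simp]: "NI \<theta> (mon (a, b)) = (\<lambda>z. qq \<theta> powi (snd a * fst b) * mon (a, (fst b, snd b - snd a)) z)"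
  by (rule ext) (auto simp: NI_def mon_def)

lemma NN_sum_list: "NN \<theta> (\<lambda>z. \<Sum>x\<leftarrow>xs. g x z) = (\<lambda>z. \<Sum>x\<leftarrow>xs. NN \<theta> (g x) z)"
  by (induction xs) (simp_all add: NN_add)

lemma emb_nu_single: "k \<in> finsupp \<Longrightarrow> k' \<in> finsupp \<Longrightarrow>
   emb (map (\<lambda>(a, b). (a, amul \<theta> b k')) (delta k)) = NN \<theta> (tens k k')"
proof -
  assume k: "k \<in> finsupp" and k': "k' \<in> finsupp"
  have "tens k k' = tens (linext mon k) (linext mon k')" using k k' by (simp add: linext_decomp)
  moreover have "emb (map (\<lambda>(a, b). (a, amul \<theta> b (linext mon k'))) (delta k)) = NN \<theta> (tens (linext mon k) (linext mon k'))"
    using k apply (simp add: msimps)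
    apply (subst linext_swap)
    apply (simp add: ac_simps)
    done
  ultimately show ?thesis using k' by (simp add: linext_decomp)
qed

lemma emb_append: "emb (xs @ ys) = (\<lambda>z. emb xs z + emb ys z)"
  unfolding emb_def by simp
lemma emb_Cons: "emb (x # ys) = (\<lambda>z. tens (fst x) (snd x) z + emb ys z)"
  unfolding emb_def by simp
lemma emb_Nil[simp]: "emb [] = (\<lambda>z. 0)"
  unfolding emb_def by simp

lemma emb_nu: "tlist xs \<Longrightarrow> emb (nu \<theta> xs) = NN \<theta> (emb xs)"
proof (induction xs)
  case Nil
  then show ?case by (simp add: nu_def)
next
  case (Cons x xs)
  obtain k k' where x: "x = (k, k')" by force
  have fin: "k \<in> finsupp" "k' \<in> finsupp" "tlist xs" using Cons.prems by (auto simp: tlist_def x)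
  have "nu \<theta> (x # xs) = map (\<lambda>(a, b). (a, amul \<theta> b k')) (delta k) @ nu \<theta> xs"
    by (simp add: nu_def x)
  then show ?case using Cons.IH[OF fin(3)] emb_nu_single[OF fin(1,2)]
    by (simp add: emb_append emb_Cons x NN_add)
qed
lemma cspan_map:
  assumes "x \<in> cspan G"
    and lin: "\<And>c g x. T (\<lambda>z. c * g z + x z) = (\<lambda>z. c * T g z + T x z)"
    and T0: "T (\<lambda>z. 0) = (\<lambda>z. 0)"
    and gen: "\<And>g. g \<in> G \<Longrightarrow> T g \<in> cspan H"
  shows "T x \<in> cspan H"
  using assms(1)
proof (induction x rule: cspan.induct)
  case zero then show ?case by (simp add: T0 cspan.zero)
next
  case (add g x c)
  then show ?case by (simp add: lin cspan_add cspan_scal gen)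
qed

lemma NN_lin: "NN \<theta> (\<lambda>z. c * g z + x z) = (\<lambda>z. c * NN \<theta> g z + NN \<theta> x z)"
  by (rule ext) (simp add: NN_def algebra_simps)
lemma NI_lin: "NI \<theta> (\<lambda>z. c * g z + x z) = (\<lambda>z. c * NI \<theta> g z + NI \<theta> x z)"
  by (rule ext) (simp add: NI_def algebra_simps)

lemma balR_basic_s:
  assumes "fst x' - fst x = fst y' - fst y" "snd x' = snd x" "snd y' = snd y" "s1 = s2"
  shows "(\<lambda>z. s1 * mon (x', y) z - s2 * mon (x, y') z) \<in> cspan (balR \<theta>)"
  using balR_basic[OF assms(1-3), of s1] assms(4) by simp

lemma balRop_basic0:
  "(\<lambda>z. s * qq \<theta> powi (- (m * j)) * mon ((a + j, m), (c, l)) z - s * mon ((a, m), (j + c, l)) z) \<in> cspan (balRop \<theta>)"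
proof -
  have "(\<lambda>z. tens (amul \<theta> (mon (a, m)) (incl (mon j))) (mon (c, l)) z - tens (mon (a, m)) (amul \<theta> (incl (mon j)) (mon (c, l))) z) \<in> balRop \<theta>"
    unfolding balRop_def by (rule CollectI, intro exI conjI) (auto simp: Alg_def Base_def)
  then have "(\<lambda>z. qq \<theta> powi (- (m * j)) * mon ((a + j, m), (c, l)) z - mon ((a, m), (j + c, l)) z) \<in> cspan (balRop \<theta>)"
    by (simp add: opdefs cspan_gen)
  from cspan_scal[OF this, of s] show ?thesis by (simp add: right_diff_distrib mult.assoc)
qed

lemma balRop_basic:
  assumes "fst x' - fst x = fst y' - fst y" "snd x' = snd x" "snd y' = snd y"
     "s1 = s2 * qq \<theta> powi (- (snd x * (fst x' - fst x)))"
  shows "(\<lambda>z. s1 * mon (x', y) z - s2 * mon (x, y') z) \<in> cspan (balRop \<theta>)"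
proof -
  have "x' = (fst x + (fst x' - fst x), snd x)" "y' = ((fst x' - fst x) + fst y, snd y)"
    using assms by (auto simp: prod_eq_iff)
  then show ?thesis using balRop_basic0[of s2 \<theta> "snd x" "fst x' - fst x" "fst x" "fst y" "snd y"] assms(4)
    by simp
qed

lemma perm3:
  "linext (\<lambda>a. linext (\<lambda>b. linext (\<lambda>c. X a b c) h) g) f = linext (\<lambda>a. linext (\<lambda>b. linext (\<lambda>c. X a b c) h) g) f"
  "linext (\<lambda>a. linext (\<lambda>c. linext (\<lambda>b. X a b c) g) h) f = linext (\<lambda>a. linext (\<lambda>b. linext (\<lambda>c. X a b c) h) g) f"
  "linext (\<lambda>b. linext (\<lambda>a. linext (\<lambda>c. X a b c) h) f) g = linext (\<lambda>a. linext (\<lambda>b. linext (\<lambda>c. X a b c) h) g) f"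
  "linext (\<lambda>b. linext (\<lambda>c. linext (\<lambda>a. X a b c) f) h) g = linext (\<lambda>a. linext (\<lambda>b. linext (\<lambda>c. X a b c) h) g) f"
  "linext (\<lambda>c. linext (\<lambda>a. linext (\<lambda>b. X a b c) g) f) h = linext (\<lambda>a. linext (\<lambda>b. linext (\<lambda>c. X a b c) h) g) f"
  "linext (\<lambda>c. linext (\<lambda>b. linext (\<lambda>a. X a b c) f) g) h = linext (\<lambda>a. linext (\<lambda>b. linext (\<lambda>c. X a b c) h) g) f"
  subgoal by (rule refl)
  subgoal by (rule linext_cong, rule linext_swap)
  subgoal by (rule linext_swap)
  subgoal
    apply (subst linext_cong[where G="\<lambda>b. linext (\<lambda>a. linext (\<lambda>c. X a b c) h) f"])
     apply (rule linext_swap)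
    apply (rule linext_swap)
    done
  subgoal
    apply (rule trans, rule linext_swap)
    apply (rule linext_cong, rule linext_swap)
    done
  subgoal by (rule linext_rev3[symmetric])
  done

lemma NN_balRop: "g \<in> balRop \<theta> \<Longrightarrow> NN \<theta> g \<in> cspan (balR \<theta>)"
proof -
  assume "g \<in> balRop \<theta>"
  then obtain r k k' where g: "g = (\<lambda>z. tens (amul \<theta> k (incl r)) k' z - tens k (amul \<theta> (incl r) k') z)"
    and f: "r \<in> finsupp" "k \<in> finsupp" "k' \<in> finsupp"
    by (auto simp: balRop_def)
  have "NN \<theta> (\<lambda>z. tens (amul \<theta> (linext mon k) (incl r)) (linext mon k') z - tens (linext mon k) (amul \<theta> (incl r) (linext mon k')) z) \<in> cspan (balR \<theta>)"
    apply (simp add: opdefs)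
    apply (rule cspan_diff_right, rule perm3[symmetric], simp add: linext_diff qq_mult, intro cspan_linext, rule balR_basic_s)
       apply (auto simp: qq_mult algebra_simps)
    done
  then show ?thesis using f by (simp add: g linext_decomp)
qed

lemma NI_balR: "g \<in> balR \<theta> \<Longrightarrow> NI \<theta> g \<in> cspan (balRop \<theta>)"
proof -
  assume "g \<in> balR \<theta>"
  then obtain r k k' where g: "g = (\<lambda>z. tens (amul \<theta> (incl r) k) k' z - tens k (amul \<theta> (incl r) k') z)"
    and f: "r \<in> finsupp" "k \<in> finsupp" "k' \<in> finsupp"
    by (auto simp: balR_def)
  have "NI \<theta> (\<lambda>z. tens (amul \<theta> (incl r) (linext mon k)) (linext mon k') z - tens (linext mon k) (amul \<theta> (incl r) (linext mon k')) z) \<in> cspan (balRop \<theta>)"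
    apply (simp add: opdefs)
    apply (rule cspan_diff_right, rule perm3[symmetric], simp add: linext_diff, intro cspan_linext, rule balRop_basic)
       apply (auto simp: qq_mult algebra_simps power_int_add[symmetric])
    done
  then show ?thesis using f by (simp add: g linext_decomp)
qed


lemma finsupp_add[simp]: "a \<in> finsupp \<Longrightarrow> b \<in> finsupp \<Longrightarrow> (\<lambda>z. a z + b z) \<in> finsupp"
proof -
  assume "a \<in> finsupp" "b \<in> finsupp"
  moreover have "fsupp (\<lambda>z. a z + b z) \<subseteq> fsupp a \<union> fsupp b" by (auto simp: fsupp_def)
  ultimately show ?thesis by (auto simp: finsupp_def intro: finite_subset)
qed

lemma emb_fin: "tlist ys \<Longrightarrow> emb ys \<in> finsupp"
  by (induction ys) (auto simp: tlist_def emb_Cons)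

lemma NI_fin: "F \<in> finsupp \<Longrightarrow> NI \<theta> F \<in> finsupp"
proof -
  assume F: "F \<in> finsupp"
  have "fsupp (NI \<theta> F) \<subseteq> (\<lambda>z. (fst z, (fst (snd z), snd (snd z) - snd (fst z)))) ` fsupp F"
  proof
    fix z assume "z \<in> fsupp (NI \<theta> F)"
    then have "(fst z, (fst (snd z), snd (snd z) + snd (fst z))) \<in> fsupp F"
      by (simp add: fsupp_def NI_def)
    then show "z \<in> (\<lambda>z. (fst z, (fst (snd z), snd (snd z) - snd (fst z)))) ` fsupp F"
      by (rule rev_image_eqI) simp
  qed
  then show ?thesis using F by (auto simp: finsupp_def intro: finite_subset)
qed

lemma hopf1: "tlist xs \<Longrightarrow> tlist ys \<Longrightarrow> teq (balRop \<theta>) xs ys \<Longrightarrow> teq (balR \<theta>) (nu \<theta> xs) (nu \<theta> ys)"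
  unfolding teq_def
proof -
  assume a: "tlist xs" "tlist ys" "(\<lambda>z. emb xs z - emb ys z) \<in> cspan (balRop \<theta>)"
  have "NN \<theta> (\<lambda>z. emb xs z - emb ys z) \<in> cspan (balR \<theta>)"
    using a(3) by (rule cspan_map) (auto simp: NN_lin NN_balRop)
  then show "(\<lambda>z. emb (nu \<theta> xs) z - emb (nu \<theta> ys) z) \<in> cspan (balR \<theta>)"
    using a by (simp add: emb_nu)
qed

lemma hopf2: "tlist xs \<Longrightarrow> tlist ys \<Longrightarrow> teq (balR \<theta>) (nu \<theta> xs) (nu \<theta> ys) \<Longrightarrow> teq (balRop \<theta>) xs ys"
  unfolding teq_def
proof -
  assume a: "tlist xs" "tlist ys" "(\<lambda>z. emb (nu \<theta> xs) z - emb (nu \<theta> ys) z) \<in> cspan (balR \<theta>)"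
  have "NI \<theta> (\<lambda>z. emb (nu \<theta> xs) z - emb (nu \<theta> ys) z) \<in> cspan (balRop \<theta>)"
    using a(3) by (rule cspan_map) (auto simp: NI_lin NI_balR)
  then show "(\<lambda>z. emb xs z - emb ys z) \<in> cspan (balRop \<theta>)"
    using a by (simp add: emb_nu NI_NN)
qed

lemma mon_split: "mon (fst x) (fst z) * mon (snd x) (snd z) = mon x z"
  by (auto simp: mon_def prod_eq_iff)

lemma hopf3: "tlist ys \<Longrightarrow> \<exists>xs. tlist xs \<and> teq (balR \<theta>) (nu \<theta> xs) ys"
proof -
  assume ys: "tlist ys"
  define F where "F = NI \<theta> (emb ys)"
  have F: "F \<in> finsupp" unfolding F_def by (rule NI_fin, rule emb_fin, rule ys)
  define xs where "xs = map (\<lambda>w. ((\<lambda>u. F w * mon (fst w) u), mon (snd w))) (sorted_list_of_set (fsupp F))"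
  have tl: "tlist xs" by (simp add: xs_def tlist_def)
  have "emb xs = linext mon F"
    using F unfolding xs_def emb_map linext_def
    by (simp add: sum_list_sorted finsupp_def tens_def case_prod_unfold mon_split)
  also have "\<dots> = F" using F by (rule linext_decomp)
  finally have "emb (nu \<theta> xs) = emb ys" using tl by (simp add: emb_nu F_def NN_NI)
  then show ?thesis using tl by (auto intro: teq_eq)
qed

lemma hopf: "left_Hopf_Atheta \<theta>"
  unfolding left_Hopf_Atheta_def using bialgebroid hopf1 hopf2 hopf3 by blast


lemma emb_map_coact: "m \<in> finsupp \<Longrightarrow> emb (map h (coact m)) =
   (\<lambda>z. \<Sum>n\<in>fsupp m. tens (fst (h (\<lambda>z. m n * mon (n, 0) z, rone))) (snd (h (\<lambda>z. m n * mon (n, 0) z, rone))) z)"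
  unfolding coact_def emb_map by (simp add: sum_list_sorted finsupp_def comp_def)

lemma emb_map_coact': "m \<in> finsupp \<Longrightarrow>
  (\<And>c n. tens (fst (h (\<lambda>z. c * mon (n, 0) z, rone))) (snd (h (\<lambda>z. c * mon (n, 0) z, rone)))
     = (\<lambda>z. c * tens (fst (h (mon (n, 0), rone))) (snd (h (mon (n, 0), rone))) z)) \<Longrightarrow>
  emb (map h (coact m)) = linext (\<lambda>n. tens (fst (h (mon (n, 0), rone))) (snd (h (mon (n, 0), rone)))) m"
  by (simp add: emb_map_coact linext_def)

lemma emb_coact: "m \<in> finsupp \<Longrightarrow> emb (coact m) = linext (\<lambda>n. mon ((n, 0), 0)) m"
  using emb_map_coact'[of m id] by (simp add: rone_def)

lemma emb_concat_coact: "m \<in> finsupp \<Longrightarrow>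
  (\<And>c n. emb (g (\<lambda>z. c * mon (n, 0) z, rone)) = (\<lambda>z. c * emb (g (mon (n, 0), rone)) z)) \<Longrightarrow>
  emb (concat (map g (coact m))) = linext (\<lambda>n. emb (g (mon (n, 0), rone))) m"
  unfolding emb_concat coact_def by (simp add: comp_def sum_list_sorted finsupp_def linext_def)

lemma lsum_map_coact: "m \<in> finsupp \<Longrightarrow>
  (\<And>c n. g (\<lambda>z. c * mon (n, 0) z, rone) = (\<lambda>z. c * g (mon (n, 0), rone) z)) \<Longrightarrow>
  lsum (map g (coact m)) = linext (\<lambda>n. g (mon (n, 0), rone)) m"
  unfolding lsum_def coact_def by (simp add: comp_def sum_list_sorted finsupp_def linext_def)

lemmas csimps = msimps emb_map_coact' emb_coact emb_concat_coact lsum_map_coact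

lemma S1: "m \<in> finsupp \<Longrightarrow> act \<theta> m aone = m"
  by (simp add: opdefs linext_decomp)

lemma S2: "act \<theta> (act \<theta> m k) k' = act \<theta> m (amul \<theta> k k')"
  apply (simp add: opdefs linext_scal_in del: linext_scal_body)
  apply (intro linext_cong ext)
  apply (simp add: qq_mult)
  apply (simp add: algebra_simps)
  done

lemma S3: "tlist (coact m)"
  by (simp add: coact_def tlist_def rone_def)

lemma S4: "m \<in> finsupp \<Longrightarrow> r \<in> finsupp \<Longrightarrow>
  teq (balKM \<theta>) (coact (act \<theta> m (incl r))) (map (\<lambda>(a, b). (amul \<theta> (incl r) a, b)) (coact m))"
  apply (rule teq_eq)
  apply (simp add: csimps add.commute)
  done

lemma S5: "m \<in> finsupp \<Longrightarrow>
       teq3 (balKKM \<theta>)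
         (concat (map (\<lambda>(a, b). map (\<lambda>(c, d). (c, d, b)) (delta a)) (coact m)))
         (concat (map (\<lambda>(a, b). map (\<lambda>(c, d). (a, c, d)) (coact b)) (coact m)))"
  apply (rule teq3_eq)
  apply (simp add: emb3_def map_concat csimps)
  done

lemma S6: "m \<in> finsupp \<Longrightarrow> lsum (map (\<lambda>(a, b). act \<theta> b (incl (eps a))) (coact m)) = m"
  by (simp add: csimps linext_decomp)

lemma S7: "m \<in> finsupp \<Longrightarrow> r \<in> finsupp \<Longrightarrow>
       lsum (map (\<lambda>(a, b). act \<theta> b (incl (eps (amul \<theta> a (incl r))))) (coact m)) = act \<theta> m (incl r)"
  by (simp add: csimps)

lemma S9: "m \<in> finsupp \<Longrightarrow> lsum (map (\<lambda>(a, b). act \<theta> b a) (coact m)) = m"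
  by (simp add: csimps linext_decomp)



lemma amul_fin[simp]: "amul \<theta> f g \<in> finsupp" by (simp add: opdefs)
lemma act_fin[simp]: "act \<theta> f g \<in> finsupp" by (simp add: opdefs)
lemma incl_fin[simp]: "incl f \<in> finsupp" by (simp add: opdefs)

lemma amul_linext_left[simp]: "(\<And>p. F p \<in> finsupp) \<Longrightarrow> amul \<theta> (linext F f) g = linext (\<lambda>p. amul \<theta> (F p) g) f"
  by (simp add: amul_def' bilext_linext)
lemma amul_linext_right[simp]: "(\<And>p. F p \<in> finsupp) \<Longrightarrow> amul \<theta> g (linext F f) = linext (\<lambda>p. amul \<theta> g (F p)) f"
  by (simp add: amul_def' bilext_linext linext_swap[of _ f])
lemma amul_scal_left[simp]: "amul \<theta> (\<lambda>z. c * g z) h = (\<lambda>z. c * amul \<theta> g h z)"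
  by (simp add: amul_def' bilext_linext)
lemma amul_scal_right[simp]: "amul \<theta> h (\<lambda>z. c * g z) = (\<lambda>z. c * amul \<theta> h g z)"
  by (simp add: amul_def' bilext_linext)
lemma act_linext_right[simp]: "(\<And>p. F p \<in> finsupp) \<Longrightarrow> act \<theta> g (linext F f) = linext (\<lambda>p. act \<theta> g (F p)) f"
  by (simp add: act_def' bilext_linext linext_swap[of _ f])
lemma act_scal_right[simp]: "act \<theta> h (\<lambda>z. c * g z) = (\<lambda>z. c * act \<theta> h g z)"
  by (simp add: act_def' bilext_linext)

lemma amul_assoc: "amul \<theta> (amul \<theta> f g) h = amul \<theta> f (amul \<theta> g h)"
  apply (simp add: opdefs linext_scal_in del: linext_scal_body)
  apply (intro linext_cong ext)
  apply (simp add: qq_mult)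
  apply (rule arg_cong2[where f = "(*)"])
   apply (rule arg_cong[where f="power_int (qq \<theta>)"])
   apply (simp add: algebra_simps)
  apply (simp add: add.assoc)
  done

definition phi :: "real \<Rightarrow> base \<Rightarrow> alg \<Rightarrow> (alg \<times> alg) list \<Rightarrow> (alg \<times> base) list" where
  "phi \<theta> m k1 ys = concat (map (\<lambda>(km, kp). map (\<lambda>(a, b). (amul \<theta> (amul \<theta> kp a) k1, act \<theta> b km)) (coact m)) ys)"

definition LL :: "real \<Rightarrow> base \<Rightarrow> alg \<Rightarrow> ((int \<times> int) \<times> (int \<times> int) \<Rightarrow> complex) \<Rightarrow> (int \<times> int) \<times> int \<Rightarrow> complex" where
  "LL \<theta> m k1 G = linext (\<lambda>w. emb (phi \<theta> m k1 [(mon (fst w), mon (snd w))])) G"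

lemma eq_perm: "B' = B \<Longrightarrow> A = B' \<Longrightarrow> A = B" by simp

lemma emb_phi_single: "m \<in> finsupp \<Longrightarrow> km \<in> finsupp \<Longrightarrow> kp \<in> finsupp \<Longrightarrow>
   emb (phi \<theta> m k1 [(km, kp)]) = LL \<theta> m k1 (tens km kp)"
proof -
  assume f: "m \<in> finsupp" "km \<in> finsupp" "kp \<in> finsupp"
  have "emb (phi \<theta> m k1 [(linext mon km, linext mon kp)]) = LL \<theta> m k1 (tens (linext mon km) (linext mon kp))"
    unfolding LL_def phi_def
    using f(1)
    apply (simp add: emb_map_coact' mult.left_commute)
    apply (rule eq_perm, rule perm3[symmetric], simp)
    done
  then show ?thesis using f by (simp add: linext_decomp)
qed
lemma phi_Cons: "phi \<theta> m k1 (y # ys) = phi \<theta> m k1 [y] @ phi \<theta> m k1 ys"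
  by (simp add: phi_def)
lemma phi_Nil[simp]: "phi \<theta> m k1 [] = []"
  by (simp add: phi_def)

lemma linext_lin: "g \<in> finsupp \<Longrightarrow> x \<in> finsupp \<Longrightarrow>
  linext F (\<lambda>z. c * g z + x z) = (\<lambda>z. c * linext F g z + linext F x z)"
proof -
  assume g: "g \<in> finsupp" and x: "x \<in> finsupp"
  define S where "S = fsupp g \<union> fsupp x"
  have S: "finite S" using g x by (simp add: S_def finsupp_def)
  have s1: "fsupp (\<lambda>z. c * g z + x z) \<subseteq> S" by (auto simp: S_def fsupp_def)
  have s2: "fsupp g \<subseteq> S" "fsupp x \<subseteq> S" by (auto simp: S_def)
  show ?thesis
    unfolding linext_superset[OF S s1] linext_superset[OF S s2(1)] linext_superset[OF S s2(2)]
    by (simp add: algebra_simps sum.distrib sum_distrib_left)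
qed

lemma LL_lin: "g \<in> finsupp \<Longrightarrow> x \<in> finsupp \<Longrightarrow>
  LL \<theta> m k1 (\<lambda>z. c * g z + x z) = (\<lambda>z. c * LL \<theta> m k1 g z + LL \<theta> m k1 x z)"
  unfolding LL_def by (rule linext_lin)

lemma emb_phi: "m \<in> finsupp \<Longrightarrow> tlist ys \<Longrightarrow> emb (phi \<theta> m k1 ys) = LL \<theta> m k1 (emb ys)"
proof (induction ys)
  case Nil
  then show ?case by (simp add: LL_def)
next
  case (Cons y ys)
  have f: "fst y \<in> finsupp" "snd y \<in> finsupp" "tlist ys" using Cons.prems by (auto simp: tlist_def)
  have e: "emb (y # ys) = (\<lambda>z. 1 * tens (fst y) (snd y) z + emb ys z)" by (simp add: emb_Cons)
  have "emb (phi \<theta> m k1 (y # ys)) = (\<lambda>z. emb (phi \<theta> m k1 [y]) z + emb (phi \<theta> m k1 ys) z)"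
    by (subst phi_Cons) (rule emb_append)
  also have "\<dots> = (\<lambda>z. 1 * LL \<theta> m k1 (tens (fst y) (snd y)) z + LL \<theta> m k1 (emb ys) z)"
    using emb_phi_single[OF Cons.prems(1) f(1,2), of \<theta> k1] Cons.IH[OF Cons.prems(1) f(3)]
    by simp
  also have "\<dots> = LL \<theta> m k1 (emb (y # ys))"
    unfolding e using LL_lin[of "tens (fst y) (snd y)" "emb ys" \<theta> m k1 1] emb_fin[OF f(3)] f
    by simp
  finally show ?case .
qed
lemma LL_diff: "g \<in> finsupp \<Longrightarrow> x \<in> finsupp \<Longrightarrow>
  LL \<theta> m k1 (\<lambda>z. g z - x z) = (\<lambda>z. LL \<theta> m k1 g z - LL \<theta> m k1 x z)"
  using LL_lin[of x g \<theta> m k1 "-1"] by (simp add: algebra_simps)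

lemma balKM_gen: "r \<in> finsupp \<Longrightarrow> X \<in> finsupp \<Longrightarrow> Y \<in> finsupp \<Longrightarrow>
  (\<lambda>z. tens X (act \<theta> Y (incl r)) z - tens (amul \<theta> (incl r) X) Y z) \<in> cspan (balKM \<theta>)"
proof -
  assume f: "r \<in> finsupp" "X \<in> finsupp" "Y \<in> finsupp"
  have "(\<lambda>z. tens (amul \<theta> (incl r) X) Y z - tens X (act \<theta> Y (incl r)) z) \<in> balKM \<theta>"
    unfolding balKM_def using f by (auto simp: Alg_def Base_def)
  from cspan_scal[OF cspan_gen[OF this], of "-1"] show ?thesis by (simp add: algebra_simps)
qed

lemma LL_gen: "m \<in> finsupp \<Longrightarrow> g \<in> balRop \<theta> \<Longrightarrow> LL \<theta> m k1 g \<in> cspan (balKM \<theta>)"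
proof -
  assume m: "m \<in> finsupp" and "g \<in> balRop \<theta>"
  then obtain r k k' where g: "g = (\<lambda>z. tens (amul \<theta> k (incl r)) k' z - tens k (amul \<theta> (incl r) k') z)"
    and f: "r \<in> finsupp" "k \<in> finsupp" "k' \<in> finsupp"
    by (auto simp: balRop_def)
  have "LL \<theta> m k1 g = (\<lambda>z. emb (phi \<theta> m k1 [(amul \<theta> k (incl r), k')]) z - emb (phi \<theta> m k1 [(k, amul \<theta> (incl r) k')]) z)"
    unfolding g using f m by (simp add: LL_diff emb_phi_single)
  also have "\<dots> = (\<lambda>z. \<Sum>n\<in>fsupp m.
      tens (amul \<theta> (amul \<theta> k' (\<lambda>z. m n * mon (n, 0) z)) k1) (act \<theta> (act \<theta> rone k) (incl r)) z
    - tens (amul \<theta> (incl r) (amul \<theta> (amul \<theta> k' (\<lambda>z. m n * mon (n, 0) z)) k1)) (act \<theta> rone k) z)"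
    using m by (simp add: phi_def emb_map_coact S2 amul_assoc sum_subtractf del: amul_scal_left amul_scal_right)
  also have "\<dots> \<in> cspan (balKM \<theta>)"
    by (rule cspan_sum, rule balKM_gen) (use f in auto)
  finally show ?thesis .
qed


lemma cspan_map':
  assumes "x \<in> cspan G" "G \<subseteq> finsupp"
    and lin: "\<And>c g x. g \<in> finsupp \<Longrightarrow> x \<in> finsupp \<Longrightarrow> T (\<lambda>z. c * g z + x z) = (\<lambda>z. c * T g z + T x z)"
    and T0: "T (\<lambda>z. 0) = (\<lambda>z. 0)"
    and gen: "\<And>g. g \<in> G \<Longrightarrow> T g \<in> cspan H"
  shows "T x \<in> cspan H"
  using assms(1)
proof (induction x rule: cspan.induct)
  case zero then show ?case by (simp add: T0 cspan.zero)
next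
  case (add g x c)
  have "g \<in> finsupp" "x \<in> finsupp" using add.hyps assms(2) cspan_finsupp by auto
  then show ?case using add by (simp add: lin cspan_add cspan_scal gen)
qed

lemma finsupp_diff[simp]: "a \<in> finsupp \<Longrightarrow> b \<in> finsupp \<Longrightarrow> (\<lambda>z. a z - b z) \<in> finsupp"
proof -
  assume "a \<in> finsupp" "b \<in> finsupp"
  moreover have "fsupp (\<lambda>z. a z - b z) \<subseteq> fsupp a \<union> fsupp b" by (auto simp: fsupp_def)
  ultimately show ?thesis by (auto simp: finsupp_def intro: finite_subset)
qed

lemma balRop_fin: "balRop \<theta> \<subseteq> finsupp"
  by (auto simp: balRop_def)

lemma LL_zero: "LL \<theta> m k1 (\<lambda>z. 0) = (\<lambda>z. 0)" by (simp add: LL_def)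

lemma AYD_wd: "m \<in> finsupp \<Longrightarrow> tlist ys \<Longrightarrow> tlist ys' \<Longrightarrow> teq (balRop \<theta>) ys ys' \<Longrightarrow>
  (\<lambda>z. emb (phi \<theta> m k1 ys) z - emb (phi \<theta> m k1 ys') z) \<in> cspan (balKM \<theta>)"
proof -
  assume m: "m \<in> finsupp" and t: "tlist ys" "tlist ys'" and e: "teq (balRop \<theta>) ys ys'"
  have "LL \<theta> m k1 (\<lambda>z. emb ys z - emb ys' z) \<in> cspan (balKM \<theta>)"
    using e[unfolded teq_def] balRop_fin
    by (rule cspan_map') (auto simp: LL_lin LL_zero LL_gen m)
  then show ?thesis using t m by (simp add: emb_phi LL_diff emb_fin)
qed

lemma teq_sym: "teq G xs ys \<Longrightarrow> teq G ys xs"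
  unfolding teq_def using cspan_scal[of _ G "-1"] by fastforce

lemma teq_trans: "teq G xs ys \<Longrightarrow> teq G ys zs \<Longrightarrow> teq G xs zs"
  unfolding teq_def using cspan_add by fastforce

definition canon :: "int \<Rightarrow> (alg \<times> alg) list" where
  "canon j = [(mon (0, j), mon (0, - j))]"

lemma canon_tl: "tlist (canon j)" by (simp add: canon_def tlist_def)

lemma nu_canon: "teq (balR \<theta>) (nu \<theta> (canon j)) [(mon (0, j), aone)]"
  apply (rule teq_eq)
  apply (simp add: emb_nu canon_tl)
  apply (simp add: canon_def aone_def)
  done

lemma tinv_canon:
  assumes "tlist ys" "teq (balR \<theta>) (nu \<theta> ys) [(mon (0, j), aone)]"
  shows "teq (balRop \<theta>) ys (canon j)"
proof -
  have "teq (balR \<theta>) (nu \<theta> ys) (nu \<theta> (canon j))"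
    using assms(2) nu_canon[of \<theta> j] by (blast intro: teq_trans teq_sym)
  then show ?thesis using hopf2 assms(1) canon_tl by blast
qed

lemma canon_val: "m \<in> finsupp \<Longrightarrow> k \<in> finsupp \<Longrightarrow>
  (\<lambda>z. \<Sum>p\<in>fsupp k. emb (phi \<theta> m (\<lambda>z. k p * mon p z) (canon (snd p))) z) = emb (coact (act \<theta> m k))"
  apply (simp add: phi_def canon_def csimps fold_linext)
  apply (subst linext_swap)
  apply (intro linext_cong ext)
  apply (simp add: qq_mult add.commute)
  apply (rule disjI2, rule arg_cong[where f="power_int (qq \<theta>)"])
  apply (simp add: algebra_simps)
  done
lemma AYD:
  assumes H: "\<forall>k\<in>Alg. tlist (tinv k) \<and> teq (balR \<theta>) (nu \<theta> (tinv k)) [(k, aone)]"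
    and m: "m \<in> finsupp" and k: "k \<in> finsupp"
  shows "teq (balKM \<theta>) (coact (act \<theta> m k))
            (concat (map (\<lambda>(k1, k2). concat (map (\<lambda>(km, kp).
                map (\<lambda>(a, b). (amul \<theta> (amul \<theta> kp a) k1, act \<theta> b km)) (coact m)) (tinv k2))) (delta k)))"
proof -
  have R: "emb (concat (map (\<lambda>(k1, k2). concat (map (\<lambda>(km, kp).
                map (\<lambda>(a, b). (amul \<theta> (amul \<theta> kp a) k1, act \<theta> b km)) (coact m)) (tinv k2))) (delta k)))
     = (\<lambda>z. \<Sum>p\<in>fsupp k. emb (phi \<theta> m (\<lambda>z. k p * mon p z) (tinv (mon (0, snd p)))) z)"
    unfolding emb_concat delta_def phi_def using k
    by (simp add: comp_def sum_list_sorted finsupp_def emb_concat)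
  have each: "(\<lambda>z. emb (phi \<theta> m (\<lambda>z. k p * mon p z) (canon (snd p))) z
                 - emb (phi \<theta> m (\<lambda>z. k p * mon p z) (tinv (mon (0, snd p)))) z) \<in> cspan (balKM \<theta>)" for p
  proof -
    have h: "tlist (tinv (mon (0, snd p)))" "teq (balR \<theta>) (nu \<theta> (tinv (mon (0, snd p)))) [(mon (0, snd p), aone)]"
      using H by (auto simp: Alg_def)
    show ?thesis
      by (rule AYD_wd[OF m canon_tl h(1)], rule teq_sym, rule tinv_canon[OF h])
  qed
  show ?thesis
    unfolding teq_def R canon_val[OF m k, symmetric, of \<theta>]
    by (simp add: sum_subtractf[symmetric] cspan_sum each)
qed

lemma sayd: "SAYD_Atheta \<theta> (act \<theta>) coact"
  unfolding SAYD_Atheta_def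
  apply (intro conjI ballI allI impI)
  apply (simp add: S1 Base_def)
  apply (rule S2)
  apply (rule S3)
  apply (rule S4; simp add: Base_def)
  apply (rule S5; simp add: Base_def)
  apply (rule S6; simp add: Base_def)
  apply (rule S7; simp add: Base_def)
  apply (rule AYD; simp add: Base_def)
  apply (rule S9; simp add: Base_def)
  done

theorem mainTheorem6:
  fixes \<theta> :: real
  shows "left_Hopf_Atheta \<theta> \<and> right_character_Atheta \<theta> (chi \<theta>) \<and> SAYD_Atheta \<theta> (act \<theta>) coact"
  using hopf character sayd by blast

end
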